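(* Let $(\Omega,d)$ be a compact metric space, $J \subset \mathbb{R}$ an open interval and $\pi_\lambda \colon \Omega \to \mathbb{R}$, $\lambda \in J$, continuous maps, smooth in $\lambda$, satisfying transversality and regularity of order $\tau \in [0,1)$ (defined below). Fix $x,y \in \Omega$ with $x \neq y$, write $r = d(x,y)$ and $\Phi_\lambda = \Phi_\lambda(x,y)$, and let $I$ be a compact subinterval of $J$. The set $\{\lambda \in \operatorname{int} I : |\Phi_{\lambda}| < \delta_{I,\tau}r^{\tau}\}$ can be written as a countable union of disjoint maximal open intervals $I_{1},I_{2},\ldots \subset I$, and: (i) $\mathcal{L}^{1}(I_{j}) \leq 2$ for all $j$; furthermore, if $I_{j}$ and $I$ have no common boundary point, then $r^{2\tau} \lesssim_{I,\tau} \mathcal{L}^{1}(I_{j})$. Consequently there are only finitely many intervals $I_{j}$. (ii) There exist points $\lambda_{j} \in \bar{I}_{j}$ such that for all $\lambda \in \bar{I}_{j}$, $|\Phi_{\lambda}| \geq |\Phi_{\lambda_{j}}|$ and $|\Phi_{\lambda}| \geq \delta_{I,\tau}r^{\tau}|\lambda - \lambda_{j}|$. Furthermore, there exists a constant $\varepsilon > 0$, depending only on $I$ and $\tau$ (and the family), such that: (a) if $\lambda \in I_{j}$ and $|\Phi_{\lambda}| \leq \delta_{I,\tau}r^{\tau}/2$, then $(\lambda - \varepsilon r^{2\tau},\lambda + \varepsilon r^{2\tau}) \cap I \subset I_{j}$; and (b) if $|\Phi_{\lambda_{j}}| \geq \delta_{I,\tau}r^{\tau}/2$, then $|\Phi_{\lambda}|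 \geq \delta_{I,\tau}r^{\tau}/2$ for all $\lambda \in (\lambda_{j} - \varepsilon r^{2\tau}, \lambda_{j} + \varepsilon r^{2\tau}) \cap I$.
   Context: $\Phi_{\lambda}(x,y) := (\pi_{\lambda}(x) - \pi_{\lambda}(y))/d(x,y)$ for $x \neq y$. Transversality of order $\tau$: for every compact $I \subset J$ there is $\delta_{I,\tau} > 0$ with $|\Phi_{\lambda}(x,y)| \leq \delta_{I,\tau}d(x,y)^{\tau} \Rightarrow |\partial_{\lambda}\Phi_{\lambda}(x,y)| \geq \delta_{I,\tau}d(x,y)^{\tau}$ for all $\lambda \in I$, $x,y \in \Omega$; $\delta_{I,\tau}$ in the statement is this constant. Regularity of order $\tau$: for every compact $I \subset J$ and integer $l \geq 0$ there is $C_{I,l,\tau}$ with $|\partial_{\lambda}^{l}\Phi_{\lambda}(x,y)| \leq C_{I,l,\tau}d(x,y)^{-l\tau}$ for all $\lambda \in I$, $x,y$. $\mathcal{L}^1$ is Lebesgue measure; $A \lesssim_{I,\tau} B$ means $A \leq CB$ with $C$ depending only on $I,\tau$ (and the constants of the family). *)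

theory Defs
  imports "HOL-Analysis.Analysis"
begin

definition Phi :: "(real \<Rightarrow> 'a::metric_space \<Rightarrow> real) \<Rightarrow> real \<Rightarrow> 'a \<Rightarrow> 'a \<Rightarrow> real" where
  "Phi \<pi> t x y = (\<pi> t x - \<pi> t y) / dist x y"

definition smooth_in_param :: "real set \<Rightarrow> (real \<Rightarrow> 'a \<Rightarrow> real) \<Rightarrow> 'a set \<Rightarrow> bool" where
  "smooth_in_param J \<pi> \<Omega> \<longleftrightarrow>
     (\<forall>x\<in>\<Omega>. \<forall>n::nat. \<forall>t\<in>J. ((deriv ^^ n) (\<lambda>s. \<pi> s x)) differentiable (at t))"

definition transversal_const ::
  "'a::metric_space set \<Rightarrow> (real \<Rightarrow> 'a \<Rightarrow> real) \<Rightarrow> real \<Rightarrow> real set \<Rightarrow> real \<Rightarrow> bool" where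
  "transversal_const \<Omega> \<pi> \<tau> I \<delta> \<longleftrightarrow> \<delta> > 0 \<and>
     (\<forall>t\<in>I. \<forall>x\<in>\<Omega>. \<forall>y\<in>\<Omega>. x \<noteq> y \<longrightarrow>
        \<bar>Phi \<pi> t x y\<bar> \<le> \<delta> * dist x y powr \<tau> \<longrightarrow>
        \<bar>deriv (\<lambda>s. Phi \<pi> s x y) t\<bar> \<ge> \<delta> * dist x y powr \<tau>)"

definition transversality ::
  "'a::metric_space set \<Rightarrow> real set \<Rightarrow> (real \<Rightarrow> 'a \<Rightarrow> real) \<Rightarrow> real \<Rightarrow> bool" where
  "transversality \<Omega> J \<pi> \<tau> \<longleftrightarrow>
     (\<forall>I. compact I \<and> I \<subseteq> J \<longrightarrow> (\<exists>\<delta>. transversal_const \<Omega> \<pi> \<tau> I \<delta>))"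

definition regularity ::
  "'a::metric_space set \<Rightarrow> real set \<Rightarrow> (real \<Rightarrow> 'a \<Rightarrow> real) \<Rightarrow> real \<Rightarrow> bool" where
  "regularity \<Omega> J \<pi> \<tau> \<longleftrightarrow>
     (\<forall>I. compact I \<and> I \<subseteq> J \<longrightarrow> (\<forall>l::nat. \<exists>C. \<forall>t\<in>I. \<forall>x\<in>\<Omega>. \<forall>y\<in>\<Omega>. x \<noteq> y \<longrightarrow>
        \<bar>(deriv ^^ l) (\<lambda>s. Phi \<pi> s x y) t\<bar> \<le> C * dist x y powr (- real l * \<tau>)))"

end

theory Submission
  imports Defs "HOL-Analysis.Analysis"
begin



context
  fixes f f' :: "real \<Rightarrow> real" and a b D K e :: real
  assumes derA: "\<forall>t\<in>{a..b}. (f has_real_derivative f' t) (at t)"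
    and KbA: "\<forall>t\<in>{a..b}. \<bar>f' t\<bar> \<le> K"
    and trA: "\<forall>t\<in>{a..b}. \<bar>f t\<bar> \<le> D \<longrightarrow> D \<le> \<bar>f' t\<bar>"
    and Dpos: "0 < D" and Kpos: "0 < K" and epos: "0 < e" and Ke: "K * e \<le> D / 2"
    and ab: "a \<le> b"
begin

lemma der: "t \<in> {a..b} \<Longrightarrow> (f has_real_derivative f' t) (at t)"
  using derA by blast

lemma Kb: "t \<in> {a..b} \<Longrightarrow> \<bar>f' t\<bar> \<le> K"
  using KbA by blast

lemma tr: "t \<in> {a..b} \<Longrightarrow> \<bar>f t\<bar> \<le> D \<Longrightarrow> D \<le> \<bar>f' t\<bar>"
  using trA by blast

lemma contf: "continuous_on {a..b} f"
  using der by (meson DERIV_isCont continuous_at_imp_continuous_on)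

lemma regb:
  assumes "s \<in> {a..b}" "t \<in> {a..b}"
  shows "\<bar>f t - f s\<bar> \<le> K * \<bar>t - s\<bar>"
proof -
  have *: "\<bar>f t - f s\<bar> \<le> K * (t - s)" if "s \<in> {a..b}" "t \<in> {a..b}" "s < t" for s t
  proof -
    have "\<And>x. s \<le> x \<Longrightarrow> x \<le> t \<Longrightarrow> (f has_real_derivative f' x) (at x)"
      using der that by auto
    from MVT2[OF \<open>s < t\<close> this] obtain z where z: "s < z" "z < t" "f t - f s = (t - s) * f' z"
      by blast
    then have "\<bar>f t - f s\<bar> = (t - s) * \<bar>f' z\<bar>" by (simp add: abs_mult)
    also have "\<dots> \<le> (t - s) * K" using Kb[of z] that z by (intro mult_left_mono) auto
    finally show ?thesis by (simp add: mult.commute)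
  qed
  show ?thesis
  proof (cases s t rule: linorder_cases)
    case less then show ?thesis using *[OF assms less] by simp
  next
    case greater then show ?thesis using *[OF assms(2,1) greater] by (simp add: abs_minus_commute)
  qed simp
qed

lemma transb:
  assumes "s \<in> {a..b}" "t \<in> {a..b}" and sm: "\<And>u. min s t \<le> u \<Longrightarrow> u \<le> max s t \<Longrightarrow> \<bar>f u\<bar> \<le> D"
  shows "D * \<bar>t - s\<bar> \<le> \<bar>f t - f s\<bar>"
proof -
  have *: "D * (t - s) \<le> \<bar>f t - f s\<bar>" if "s \<in> {a..b}" "t \<in> {a..b}" "s < t"
     "\<And>u. s \<le> u \<Longrightarrow> u \<le> t \<Longrightarrow> \<bar>f u\<bar> \<le> D" for s t
  proof -
    have "\<And>x. s \<le> x \<Longrightarrow> x \<le> t \<Longrightarrow> (f has_real_derivative f' x) (at x)"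
      using der that by auto
    from MVT2[OF \<open>s < t\<close> this] obtain z where z: "s < z" "z < t" "f t - f s = (t - s) * f' z"
      by blast
    then have "\<bar>f t - f s\<bar> = (t - s) * \<bar>f' z\<bar>" by (simp add: abs_mult)
    moreover have "D \<le> \<bar>f' z\<bar>" using tr[of z] that z by auto
    ultimately show ?thesis using z by (simp add: mult.commute mult_left_mono)
  qed
  show ?thesis
  proof (cases s t rule: linorder_cases)
    case less then show ?thesis using *[OF assms(1,2) less] sm by simp
  next
    case greater then show ?thesis using *[OF assms(2,1) greater] sm by (simp add: abs_minus_commute)
  qed simp
qed

abbreviation "S \<equiv> {t \<in> {a<..<b}. \<bar>f t\<bar> < D}"

lemma S_open: "open S"
proof -
  have "S = {a<..<b} \<inter> (\<lambda>t. \<bar>f t\<bar>) -` {..<D}" by auto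
  moreover have "continuous_on {a<..<b} (\<lambda>t. \<bar>f t\<bar>)"
    by (intro continuous_on_rabs continuous_on_subset[OF contf]) auto
  ultimately show ?thesis by (simp add: continuous_open_preimage)
qed

lemma clS: "closure S \<subseteq> {t \<in> {a..b}. \<bar>f t\<bar> \<le> D}"
proof (rule closure_minimal)
  have "{t \<in> {a..b}. \<bar>f t\<bar> \<le> D} = {a..b} \<inter> (\<lambda>t. \<bar>f t\<bar>) -` {..D}" by auto
  moreover have "continuous_on {a..b} (\<lambda>t. \<bar>f t\<bar>)"
    by (intro continuous_on_rabs contf)
  ultimately show "closed {t \<in> {a..b}. \<bar>f t\<bar> \<le> D}" by (simp add: continuous_closed_preimage)
qed auto

lemma comp_basic:
  assumes C: "C \<in> components S"
  shows "C = {Inf C<..<Sup C} \<and> Inf C < Sup C \<and> a \<le> Inf C \<and> Sup C \<le> b"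
proof -
  have ne: "C \<noteq> {}" using in_components_nonempty[OF C] .
  have op: "open C" using open_components[OF S_open C] .
  have iv: "is_interval C" using in_components_connected[OF C] is_interval_connected_1 by blast
  have sub: "C \<subseteq> {a<..<b}" using in_components_subset[OF C] by auto
  have bb: "bdd_below C" "bdd_above C"
    by (rule bdd_below_mono[OF _ sub], simp) (rule bdd_above_mono[OF _ sub], simp)
  have 1: "C \<subseteq> {Inf C<..<Sup C}"
  proof
    fix t assume t: "t \<in> C"
    obtain r where r: "r > 0" "ball t r \<subseteq> C" using op t open_contains_ball by blast
    have "t + r/2 \<in> C" "t - r/2 \<in> C" using r by (auto simp: dist_real_def subsetD)
    then have "t + r/2 \<le> Sup C" "Inf C \<le> t - r/2" using bb by (auto intro: cSup_upper cInf_lower)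
    then show "t \<in> {Inf C<..<Sup C}" using r by auto
  qed
  have 2: "{Inf C<..<Sup C} \<subseteq> C"
  proof
    fix t assume t: "t \<in> {Inf C<..<Sup C}"
    obtain u where "u \<in> C" "u < t" using t ne bb by (auto simp: cInf_less_iff)
    moreover obtain v where "v \<in> C" "t < v" using t ne bb by (auto simp: less_cSup_iff)
    ultimately show "t \<in> C" using iv unfolding is_interval_1 by (meson less_imp_le)
  qed
  have "Inf C < Sup C" using 1 ne by auto
  moreover have "a \<le> Inf C" using ne sub by (intro cInf_greatest) auto
  moreover have "Sup C \<le> b" using ne sub by (intro cSup_least) auto
  ultimately show ?thesis using 1 2 by blast
qed

lemma comp_eq: "C \<in> components S \<Longrightarrow> C = {Inf C<..<Sup C}"
  using comp_basic by blast

lemma comp_lt: "C \<in> components S \<Longrightarrow> Inf C < Sup C \<and> a \<le> Inf C \<and> Sup C \<le> b"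
  using comp_basic by blast

lemma comp_mem: "C \<in> components S \<Longrightarrow> (t \<in> C) = (Inf C < t \<and> t < Sup C)"
  using comp_eq by (metis greaterThanLessThan_iff)

lemma comp_ends:
  assumes C: "C \<in> components S"
  shows "Inf C \<notin> S" "Sup C \<notin> S"
proof -
  note CC = comp_lt[OF C]
  note sub = in_components_subset[OF C]
  note mem = comp_mem[OF C]
  have mid: "(Inf C + Sup C) / 2 \<in> C" using mem CC by auto
  have mid1: "(Inf C + Sup C) / 2 \<in> {Inf C..<Sup C}" "(Inf C + Sup C) / 2 \<in> {Inf C<..Sup C}" using CC by auto
  have ne1: "C \<inter> {Inf C..<Sup C} \<noteq> {}" "C \<inter> {Inf C<..Sup C} \<noteq> {}" using mid mid1 by blast+
  show "Inf C \<notin> S"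
  proof
    assume c: "Inf C \<in> S"
    have "{Inf C..<Sup C} \<subseteq> S" using c sub mem by (auto simp: subset_eq)
    then have "{Inf C..<Sup C} \<subseteq> C"
      using ne1 by (intro components_maximal[OF C]) (auto simp: is_interval_connected_1[symmetric])
    then show False using CC mem by auto
  qed
  show "Sup C \<notin> S"
  proof
    assume c: "Sup C \<in> S"
    have "{Inf C<..Sup C} \<subseteq> S" using c sub mem by (auto simp: subset_eq)
    then have "{Inf C<..Sup C} \<subseteq> C"
      using ne1 by (intro components_maximal[OF C]) (auto simp: is_interval_connected_1[symmetric])
    then show False using CC mem by auto
  qed
qed

lemma comp_cl:
  assumes C: "C \<in> components S"
  shows "closure C = {Inf C..Sup C}" "\<And>t. t \<in> {Inf C..Sup C} \<Longrightarrow> t \<in> {a..b} \<and> \<bar>f t\<bar> \<le> D"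
proof -
  have CC: "Inf C < Sup C" using comp_lt[OF C] by blast
  have "closure {Inf C<..<Sup C} = {Inf C..Sup C}" using CC by simp
  then show cl: "closure C = {Inf C..Sup C}" using arg_cong[where f=closure, OF comp_eq[OF C]] by simp
  have "closure C \<subseteq> closure S" using in_components_subset[OF C] by (rule closure_mono)
  with clS cl show "\<And>t. t \<in> {Inf C..Sup C} \<Longrightarrow> t \<in> {a..b} \<and> \<bar>f t\<bar> \<le> D" by auto
qed

lemma comp_len:
  assumes C: "C \<in> components S"
  shows "Sup C - Inf C \<le> 2"
proof -
  have CC: "Inf C < Sup C" using comp_lt[OF C] by blast
  note cl = comp_cl[OF C]
  have "D * \<bar>Sup C - Inf C\<bar> \<le> \<bar>f (Sup C) - f (Inf C)\<bar>"
    using CC cl(2) by (intro transb) auto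
  also have "\<dots> \<le> 2 * D" using cl(2)[of "Inf C"] cl(2)[of "Sup C"] CC by auto
  finally show ?thesis using CC Dpos by simp
qed

lemma comp_low:
  assumes C: "C \<in> components S" and "a < Inf C" "Sup C < b"
  shows "2 * D \<le> K * (Sup C - Inf C)"
proof -
  have CC: "Inf C < Sup C" using comp_lt[OF C] by blast
  note cl = comp_cl[OF C]
  have "\<bar>f (Inf C)\<bar> = D" using comp_ends(1)[OF C] cl(2)[of "Inf C"] CC assms by auto
  moreover have "\<bar>f (Sup C)\<bar> = D" using comp_ends(2)[OF C] cl(2)[of "Sup C"] CC assms by auto
  moreover have "D * \<bar>Sup C - Inf C\<bar> \<le> \<bar>f (Sup C) - f (Inf C)\<bar>"
    using CC cl(2) by (intro transb) auto
  moreover have "0 < D * \<bar>Sup C - Inf C\<bar>" using CC Dpos by simp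
  ultimately have "\<bar>f (Sup C) - f (Inf C)\<bar> = 2 * D" by (auto simp: abs_if split: if_splits)
  moreover have "\<bar>f (Sup C) - f (Inf C)\<bar> \<le> K * \<bar>Sup C - Inf C\<bar>"
    using CC cl(2) by (intro regb) auto
  ultimately show ?thesis using CC by simp
qed

lemma comp_a:
  assumes C: "C \<in> components S" and t: "t \<in> C" "\<bar>f t\<bar> \<le> D / 2"
  shows "{t - e<..<t + e} \<inter> {a<..<b} \<subseteq> C"
proof
  fix s assume s: "s \<in> {t - e<..<t + e} \<inter> {a<..<b}"
  have tS: "t \<in> {a<..<b}" using in_components_subset[OF C] t by auto
  let ?T = "{min s t..max s t}"
  have "?T \<subseteq> S"
  proof
    fix u assume u: "u \<in> ?T"
    have "\<bar>f u - f t\<bar> \<le> K * \<bar>u - t\<bar>" using u s tS by (intro regb) auto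
    also have "\<dots> < K * e"
      using u s Kpos by (intro mult_strict_left_mono) auto
    finally have "\<bar>f u\<bar> < D" using Ke t by linarith
    then show "u \<in> S" using u s tS by auto
  qed
  then have "?T \<subseteq> C"
    using t by (intro components_maximal[OF C]) (auto simp: is_interval_connected_1[symmetric])
  then show "s \<in> C" by auto
qed

lemma comp_b:
  assumes C: "C \<in> components S"
  shows "\<exists>tj\<in>closure C.
              (\<forall>t\<in>closure C. \<bar>f t\<bar> \<ge> \<bar>f tj\<bar> \<and> \<bar>f t\<bar> \<ge> D * \<bar>t - tj\<bar>) \<and>
              (\<bar>f tj\<bar> \<ge> D / 2 \<longrightarrow> (\<forall>t\<in>{tj - e <..< tj + e} \<inter> {a..b}. \<bar>f t\<bar> \<ge> D / 2))"
proof -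
  have CC: "Inf C < Sup C" "a \<le> Inf C" "Sup C \<le> b" using comp_lt[OF C] by blast+
  note cl = comp_cl[OF C]
  have cf: "continuous_on {Inf C..Sup C} f"
    by (rule continuous_on_subset[OF contf]) (use cl(2) in auto)
  obtain tj where tj: "tj \<in> {Inf C..Sup C}" "\<And>y. y \<in> {Inf C..Sup C} \<Longrightarrow> \<bar>f tj\<bar> \<le> \<bar>f y\<bar>"
    using continuous_attains_inf[of "{Inf C..Sup C}" "\<lambda>t. \<bar>f t\<bar>", OF _ _ continuous_on_rabs[OF cf]] CC
    by auto
  have iv: "is_interval (f ` {Inf C..Sup C})"
    using connected_continuous_image[OF cf] is_interval_connected_1 by auto
  have P1: "\<bar>f t\<bar> \<ge> D * \<bar>t - tj\<bar>" if t: "t \<in> {Inf C..Sup C}" for t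
  proof -
    have uu: "\<bar>f u\<bar> \<le> D" if "min tj t \<le> u" "u \<le> max tj t" for u
    proof -
      have "u \<in> {Inf C..Sup C}" using that t tj(1) by (auto simp: min_def max_def split: if_splits)
      then show ?thesis using cl(2) by blast
    qed
    have h1: "D * \<bar>t - tj\<bar> \<le> \<bar>f t - f tj\<bar>"
      using t tj cl(2) uu by (intro transb) auto
    have h2: "\<bar>f t - f tj\<bar> \<le> \<bar>f t\<bar>"
    proof (cases "f t * f tj < 0")
      case True
      then have "0 \<in> f ` {Inf C..Sup C}"
        using iv t tj(1) unfolding is_interval_1
        by (metis image_eqI less_eq_real_def mult_less_0_iff)
      then obtain z where "z \<in> {Inf C..Sup C}" "f z = 0" by auto
      then have "f tj = 0" using tj(2)[of z] by simp
      then show ?thesis using True by simp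
    next
      case False
      then have "0 \<le> f t * f tj" by simp
      then consider "0 \<le> f t" "0 \<le> f tj" | "f t \<le> 0" "f tj \<le> 0"
        by (auto simp: zero_le_mult_iff)
      then show ?thesis using tj(2)[OF t] by cases auto
    qed
    show ?thesis using h1 h2 by linarith
  qed
  have P2: "\<bar>f t\<bar> \<ge> D / 2" if h: "\<bar>f tj\<bar> \<ge> D / 2" and t: "t \<in> {tj - e <..< tj + e} \<inter> {a..b}" for t
  proof (cases "t \<in> {Inf C..Sup C}")
    case True then show ?thesis using tj(2)[OF True] h by linarith
  next
    case False
    then consider "t > Sup C" | "t < Inf C" by auto
    then show ?thesis
    proof cases
      case 1
      have "Sup C \<notin> S" using comp_ends(2)[OF C] .
      then have "\<bar>f (Sup C)\<bar> \<ge> D" using CC 1 t by auto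
      moreover have "\<bar>f t - f (Sup C)\<bar> \<le> K * \<bar>t - Sup C\<bar>" using CC 1 t by (intro regb) auto
      moreover have "K * \<bar>t - Sup C\<bar> \<le> K * e"
        using 1 t tj(1) Kpos by (intro mult_left_mono) auto
      ultimately show ?thesis using Ke by linarith
    next
      case 2
      have "Inf C \<notin> S" using comp_ends(1)[OF C] .
      then have "\<bar>f (Inf C)\<bar> \<ge> D" using CC 2 t by auto
      moreover have "\<bar>f t - f (Inf C)\<bar> \<le> K * \<bar>t - Inf C\<bar>" using CC 2 t by (intro regb) auto
      moreover have "K * \<bar>t - Inf C\<bar> \<le> K * e"
        using 2 t tj(1) Kpos by (intro mult_left_mono) auto
      ultimately show ?thesis using Ke by linarith
    qed
  qed
  show ?thesis using tj P1 P2 cl(1) by blast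
qed

lemma comp_sep:
  assumes C1: "C1 \<in> components S" and C2: "C2 \<in> components S" and ne: "C1 \<noteq> C2"
  shows "Sup C1 \<le> Inf C2 \<or> Sup C2 \<le> Inf C1"
proof (rule ccontr)
  assume h: "\<not> ?thesis"
  note B1 = comp_mem[OF C1] comp_lt[OF C1]
  note B2 = comp_mem[OF C2] comp_lt[OF C2]
  define p where "p = (max (Inf C1) (Inf C2) + min (Sup C1) (Sup C2)) / 2"
  have "p \<in> C1" "p \<in> C2" using h B1 B2 unfolding p_def by (auto simp: max_def min_def)
  then show False using components_nonoverlap[OF C1 C2] ne by blast
qed

lemma subsing_finite: "(\<And>x y. x \<in> A \<Longrightarrow> y \<in> A \<Longrightarrow> x = y) \<Longrightarrow> finite A"
  by (metis finite.simps insertI1 subsetI subset_singletonD finite_subset finite.emptyI finite_insert)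

lemma comps_finite: "finite (components S)"
proof -
  define Lm where "Lm = 2 * D / K"
  have Lm: "Lm > 0" using Dpos Kpos by (simp add: Lm_def)
  let ?A1 = "{C \<in> components S. a < Inf C \<and> Sup C < b}"
  let ?A2 = "{C \<in> components S. Inf C = a}"
  let ?A3 = "{C \<in> components S. Sup C = b}"
  have sub: "components S \<subseteq> ?A1 \<union> ?A2 \<union> ?A3"
    using comp_lt by fastforce
  have f2: "finite ?A2"
  proof (rule subsing_finite)
    fix C1 C2 assume "C1 \<in> ?A2" "C2 \<in> ?A2"
    then show "C1 = C2" using comp_sep[of C1 C2] comp_lt[of C1] comp_lt[of C2] by force
  qed
  have f3: "finite ?A3"
  proof (rule subsing_finite)
    fix C1 C2 assume "C1 \<in> ?A3" "C2 \<in> ?A3"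
    then show "C1 = C2" using comp_sep[of C1 C2] comp_lt[of C1] comp_lt[of C2] by force
  qed
  define g where "g C = floor ((Inf C - a) / Lm)" for C
  have len: "Lm \<le> Sup C - Inf C" if "C \<in> ?A1" for C
    using comp_low[of C] that Kpos by (auto simp: Lm_def field_simps)
  have gl: "g C1 < g C2" if "C1 \<in> ?A1" "C2 \<in> ?A1" "Sup C1 \<le> Inf C2" for C1 C2
  proof -
    have "Inf C1 + Lm \<le> Inf C2" using len[OF that(1)] that(3) by linarith
    then have "(Inf C1 - a + Lm) / Lm \<le> (Inf C2 - a) / Lm" using Lm by (intro divide_right_mono) auto
    moreover have "(Inf C1 - a + Lm) / Lm = (Inf C1 - a) / Lm + 1" using Lm by (simp add: add_divide_distrib)
    ultimately have "(Inf C1 - a) / Lm + 1 \<le> (Inf C2 - a) / Lm" by simp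
    then have "floor ((Inf C1 - a) / Lm + 1) \<le> floor ((Inf C2 - a) / Lm)" by (rule floor_mono)
    then show ?thesis unfolding g_def by simp
  qed
  have inj: "inj_on g ?A1"
  proof (rule inj_onI, rule ccontr)
    fix C1 C2 assume h: "C1 \<in> ?A1" "C2 \<in> ?A1" "g C1 = g C2" "C1 \<noteq> C2"
    then consider "Sup C1 \<le> Inf C2" | "Sup C2 \<le> Inf C1" using comp_sep by blast
    then show False using gl h by cases force+
  qed
  have "g ` ?A1 \<subseteq> {floor 0 .. floor ((b - a) / Lm)}"
  proof
    fix z assume "z \<in> g ` ?A1"
    then obtain C where C: "C \<in> ?A1" "z = g C" by auto
    have "Inf C \<le> b" using comp_lt[of C] C by auto
    then have "floor ((Inf C - a) / Lm) \<le> floor ((b - a) / Lm)" using Lm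
      by (intro floor_mono divide_right_mono) auto
    moreover have "floor (0::real) \<le> floor ((Inf C - a) / Lm)" using Lm C
      by (intro floor_mono) auto
    ultimately show "z \<in> {floor 0 .. floor ((b - a) / Lm)}" using C unfolding g_def by auto
  qed
  then have "finite (g ` ?A1)" by (rule finite_subset) simp
  then have f1: "finite ?A1" using inj finite_imageD by blast
  show ?thesis using f1 f2 f3 sub finite_subset by blast
qed

lemma abstract_main:
  "finite (components S) \<and>
   (\<forall>Ij\<in>components S. open Ij \<and> is_interval Ij \<and> Ij \<subseteq> {a..b} \<and>
      measure lborel Ij \<le> 2 \<and>
      (a \<notin> closure Ij \<and> b \<notin> closure Ij \<longrightarrow> 2 * D \<le> K * measure lborel Ij) \<and>
      (\<forall>t\<in>Ij. \<bar>f t\<bar> \<le> D / 2 \<longrightarrow> {t - e <..< t + e} \<inter> {a<..<b} \<subseteq> Ij) \<and>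
      (\<exists>tj\<in>closure Ij.
              (\<forall>t\<in>closure Ij. \<bar>f t\<bar> \<ge> \<bar>f tj\<bar> \<and> \<bar>f t\<bar> \<ge> D * \<bar>t - tj\<bar>) \<and>
              (\<bar>f tj\<bar> \<ge> D / 2 \<longrightarrow> (\<forall>t\<in>{tj - e <..< tj + e} \<inter> {a..b}. \<bar>f t\<bar> \<ge> D / 2))))"
proof (intro conjI comps_finite ballI)
  fix C assume C: "C \<in> components S"
  have CC: "Inf C < Sup C" "a \<le> Inf C" "Sup C \<le> b" using comp_lt[OF C] by blast+
  have ms: "measure lborel C = Sup C - Inf C"
    using trans[OF arg_cong[where f="measure lborel", OF comp_eq[OF C]] measure_lborel_Ioo[OF less_imp_le[OF CC(1)]]] .
  show "open C" using open_components[OF S_open C] .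
  show "is_interval C" using in_components_connected[OF C] is_interval_connected_1 by blast
  show "C \<subseteq> {a..b}" using in_components_subset[OF C] by auto
  show "measure lborel C \<le> 2" using ms comp_len[OF C] by simp
  show "a \<notin> closure C \<and> b \<notin> closure C \<longrightarrow> 2 * D \<le> K * measure lborel C"
    using comp_low[OF C] comp_cl(1)[OF C] CC ms by auto
  show "\<bar>f t\<bar> \<le> D / 2 \<longrightarrow> {t - e <..< t + e} \<inter> {a<..<b} \<subseteq> C" if "t \<in> C" for t
    using comp_a[OF C that] by blast
  show "\<exists>tj\<in>closure C.
              (\<forall>t\<in>closure C. \<bar>f t\<bar> \<ge> \<bar>f tj\<bar> \<and> \<bar>f t\<bar> \<ge> D * \<bar>t - tj\<bar>) \<and>
              (\<bar>f tj\<bar> \<ge> D / 2 \<longrightarrow> (\<forall>t\<in>{tj - e <..< tj + e} \<inter> {a..b}. \<bar>f t\<bar> \<ge> D / 2))"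
    using comp_b[OF C] .
qed
end



lemma powr_arith:
  fixes r \<delta> \<tau> K0 m :: real
  assumes "0 < \<delta>" "0 < r" "2 * (\<delta> * r powr \<tau>) \<le> K0 * r powr (- \<tau>) * m"
  shows "r powr (2 * \<tau>) \<le> K0 / (2 * \<delta>) * m"
proof -
  define p where "p = r powr \<tau>"
  have p: "p > 0" using assms by (simp add: p_def)
  have e1: "r powr (- \<tau>) = 1 / p" by (simp add: p_def powr_minus divide_inverse)
  have e2: "r powr (2 * \<tau>) = p * p" unfolding p_def by (simp add: powr_add[symmetric])
  have "2 * \<delta> * p * p \<le> K0 * m" using assms(3) p unfolding e1 p_def[symmetric]
    by (simp add: field_simps)
  then show ?thesis unfolding e2 using assms(1) by (simp add: field_simps)
qed

theorem lemmaA1: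
  fixes \<Omega> :: "'a::metric_space set"
    and J :: "real set"
    and \<pi> :: "real \<Rightarrow> 'a \<Rightarrow> real"
    and \<tau> a b \<delta> :: real
  assumes "compact \<Omega>"
    and "open J" and "is_interval J"
    and "\<forall>t\<in>J. continuous_on \<Omega> (\<pi> t)"
    and "smooth_in_param J \<pi> \<Omega>"
    and "0 \<le> \<tau>" and "\<tau> < 1"
    and "transversality \<Omega> J \<pi> \<tau>"
    and "regularity \<Omega> J \<pi> \<tau>"
    and "a \<le> b" and "{a..b} \<subseteq> J"
    and "transversal_const \<Omega> \<pi> \<tau> {a..b} \<delta>"
  shows "\<exists>C>0. \<exists>\<epsilon>>0. \<forall>x\<in>\<Omega>. \<forall>y\<in>\<Omega>. x \<noteq> y \<longrightarrow>
    (let r = dist x y;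
         S = {t \<in> {a<..<b}. \<bar>Phi \<pi> t x y\<bar> < \<delta> * r powr \<tau>}
     in countable (components S) \<and> finite (components S) \<and>
        (\<forall>Ij\<in>components S. open Ij \<and> is_interval Ij \<and> Ij \<subseteq> {a..b} \<and>
           measure lborel Ij \<le> 2 \<and>
           (a \<notin> closure Ij \<and> b \<notin> closure Ij \<longrightarrow> r powr (2 * \<tau>) \<le> C * measure lborel Ij) \<and>
           (\<forall>t\<in>Ij. \<bar>Phi \<pi> t x y\<bar> \<le> \<delta> * r powr \<tau> / 2 \<longrightarrow>
              {t - \<epsilon> * r powr (2 * \<tau>) <..< t + \<epsilon> * r powr (2 * \<tau>)} \<inter> {a<..<b} \<subseteq> Ij) \<and>
           (\<exists>tj\<in>closure Ij.
              (\<forall>t\<in>closure Ij. \<bar>Phi \<pi> t x y\<bar> \<ge> \<bar>Phi \<pi> tj x y\<bar> \<and>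
                 \<bar>Phi \<pi> t x y\<bar> \<ge> \<delta> * r powr \<tau> * \<bar>t - tj\<bar>) \<and>
              (\<bar>Phi \<pi> tj x y\<bar> \<ge> \<delta> * r powr \<tau> / 2 \<longrightarrow>
                 (\<forall>t\<in>{tj - \<epsilon> * r powr (2 * \<tau>) <..< tj + \<epsilon> * r powr (2 * \<tau>)} \<inter> {a..b}.
                    \<bar>Phi \<pi> t x y\<bar> \<ge> \<delta> * r powr \<tau> / 2)))))"
proof -
  have dpos: "0 < \<delta>" and tc: "\<And>t x y. t \<in> {a..b} \<Longrightarrow> x \<in> \<Omega> \<Longrightarrow> y \<in> \<Omega> \<Longrightarrow> x \<noteq> y \<Longrightarrow>
        \<bar>Phi \<pi> t x y\<bar> \<le> \<delta> * dist x y powr \<tau> \<Longrightarrow>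
        \<bar>deriv (\<lambda>s. Phi \<pi> s x y) t\<bar> \<ge> \<delta> * dist x y powr \<tau>"
    using assms(12) unfolding transversal_const_def by auto
  obtain C1 where reg: "\<And>t x y. t \<in> {a..b} \<Longrightarrow> x \<in> \<Omega> \<Longrightarrow> y \<in> \<Omega> \<Longrightarrow> x \<noteq> y \<Longrightarrow>
        \<bar>(deriv ^^ 1) (\<lambda>s. Phi \<pi> s x y) t\<bar> \<le> C1 * dist x y powr (- real 1 * \<tau>)"
    using assms(9) assms(11) unfolding regularity_def by (metis compact_Icc)
  define K0 where "K0 = max C1 1"
  have K0: "K0 > 0" "C1 \<le> K0" by (auto simp: K0_def)
  define C where "C = K0 / (2 * \<delta>)"
  define \<epsilon> where "\<epsilon> = \<delta> / (2 * K0)"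
  have Cpos: "C > 0" and epos: "\<epsilon> > 0" using K0 dpos by (auto simp: C_def \<epsilon>_def)
  have main: "(let r = dist x y;
         S = {t \<in> {a<..<b}. \<bar>Phi \<pi> t x y\<bar> < \<delta> * r powr \<tau>}
     in countable (components S) \<and> finite (components S) \<and>
        (\<forall>Ij\<in>components S. open Ij \<and> is_interval Ij \<and> Ij \<subseteq> {a..b} \<and>
           measure lborel Ij \<le> 2 \<and>
           (a \<notin> closure Ij \<and> b \<notin> closure Ij \<longrightarrow> r powr (2 * \<tau>) \<le> C * measure lborel Ij) \<and>
           (\<forall>t\<in>Ij. \<bar>Phi \<pi> t x y\<bar> \<le> \<delta> * r powr \<tau> / 2 \<longrightarrow>
              {t - \<epsilon> * r powr (2 * \<tau>) <..< t + \<epsilon> * r powr (2 * \<tau>)} \<inter> {a<..<b} \<subseteq> Ij) \<and>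
           (\<exists>tj\<in>closure Ij.
              (\<forall>t\<in>closure Ij. \<bar>Phi \<pi> t x y\<bar> \<ge> \<bar>Phi \<pi> tj x y\<bar> \<and>
                 \<bar>Phi \<pi> t x y\<bar> \<ge> \<delta> * r powr \<tau> * \<bar>t - tj\<bar>) \<and>
              (\<bar>Phi \<pi> tj x y\<bar> \<ge> \<delta> * r powr \<tau> / 2 \<longrightarrow>
                 (\<forall>t\<in>{tj - \<epsilon> * r powr (2 * \<tau>) <..< tj + \<epsilon> * r powr (2 * \<tau>)} \<inter> {a..b}.
                    \<bar>Phi \<pi> t x y\<bar> \<ge> \<delta> * r powr \<tau> / 2)))))"
    if xy: "x \<in> \<Omega>" "y \<in> \<Omega>" "x \<noteq> y" for x y
  proof -
    define r where "r = dist x y"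
    have r: "r > 0" using xy by (simp add: r_def)
    define f where "f = (\<lambda>s. Phi \<pi> s x y)"
    have der: "(f has_real_derivative deriv f t) (at t)" if t: "t \<in> {a..b}" for t
    proof -
      have tJ: "t \<in> J" using t assms(11) by auto
      have "(\<lambda>s. \<pi> s x) differentiable (at t)" "(\<lambda>s. \<pi> s y) differentiable (at t)"
        using assms(5) xy tJ unfolding smooth_in_param_def by (metis funpow_0)+
      then have "f differentiable (at t)" unfolding f_def Phi_def
        using xy by (intro differentiable_divide differentiable_diff) auto
      then show ?thesis by (simp add: DERIV_deriv_iff_real_differentiable)
    qed
    have Kb: "\<bar>deriv f t\<bar> \<le> K0 * r powr (- \<tau>)" if t: "t \<in> {a..b}" for t
    proof -
      have "\<bar>deriv f t\<bar> \<le> C1 * r powr (- \<tau>)" using reg[OF t xy] unfolding f_def r_def by simp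
      also have "\<dots> \<le> K0 * r powr (- \<tau>)" using K0 by (intro mult_right_mono) auto
      finally show ?thesis .
    qed
    have tr: "\<delta> * r powr \<tau> \<le> \<bar>deriv f t\<bar>" if "t \<in> {a..b}" "\<bar>f t\<bar> \<le> \<delta> * r powr \<tau>" for t
      using tc[OF that(1) xy] that(2) unfolding f_def r_def by simp
    have derB: "\<forall>t\<in>{a..b}. (f has_real_derivative deriv f t) (at t)" using der by blast
    have KbB: "\<forall>t\<in>{a..b}. \<bar>deriv f t\<bar> \<le> K0 * r powr (- \<tau>)" using Kb by blast
    have trB: "\<forall>t\<in>{a..b}. \<bar>f t\<bar> \<le> \<delta> * r powr \<tau> \<longrightarrow> \<delta> * r powr \<tau> \<le> \<bar>deriv f t\<bar>" using tr by blast
    have Dp: "0 < \<delta> * r powr \<tau>" using dpos r by simp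
    have Kp: "0 < K0 * r powr (- \<tau>)" using K0 r by simp
    have ep: "0 < \<epsilon> * r powr (2 * \<tau>)" using epos r by simp
    have "K0 * r powr (- \<tau>) * (\<epsilon> * r powr (2 * \<tau>)) = K0 * \<epsilon> * (r powr (- \<tau>) * r powr (2 * \<tau>))"
      by (simp add: algebra_simps)
    also have "r powr (- \<tau>) * r powr (2 * \<tau>) = r powr \<tau>" by (simp add: powr_add[symmetric])
    also have "K0 * \<epsilon> = \<delta> / 2" using K0 by (simp add: \<epsilon>_def)
    finally have Ke: "K0 * r powr (- \<tau>) * (\<epsilon> * r powr (2 * \<tau>)) \<le> \<delta> * r powr \<tau> / 2" by simp
    note AM = abstract_main[where f=f and f'="deriv f" and a=a and b=b and K="K0 * r powr (- \<tau>)" and D="\<delta> * r powr \<tau>"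
        and e="\<epsilon> * r powr (2 * \<tau>)", OF derB KbB trB Dp Kp ep Ke assms(10)]
    note AM' = AM[unfolded f_def]
    have fin: "finite (components {t \<in> {a<..<b}. \<bar>Phi \<pi> t x y\<bar> < \<delta> * r powr \<tau>})"
        by (rule AM'[THEN conjunct1])
    have each: "\<forall>Ij\<in>components {t \<in> {a<..<b}. \<bar>Phi \<pi> t x y\<bar> < \<delta> * r powr \<tau>}. open Ij \<and> is_interval Ij \<and> Ij \<subseteq> {a..b} \<and>
           measure lborel Ij \<le> 2 \<and>
           (a \<notin> closure Ij \<and> b \<notin> closure Ij \<longrightarrow> r powr (2 * \<tau>) \<le> C * measure lborel Ij) \<and>
           (\<forall>t\<in>Ij. \<bar>Phi \<pi> t x y\<bar> \<le> \<delta> * r powr \<tau> / 2 \<longrightarrow>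
              {t - \<epsilon> * r powr (2 * \<tau>) <..< t + \<epsilon> * r powr (2 * \<tau>)} \<inter> {a<..<b} \<subseteq> Ij) \<and>
           (\<exists>tj\<in>closure Ij.
              (\<forall>t\<in>closure Ij. \<bar>Phi \<pi> t x y\<bar> \<ge> \<bar>Phi \<pi> tj x y\<bar> \<and>
                 \<bar>Phi \<pi> t x y\<bar> \<ge> \<delta> * r powr \<tau> * \<bar>t - tj\<bar>) \<and>
              (\<bar>Phi \<pi> tj x y\<bar> \<ge> \<delta> * r powr \<tau> / 2 \<longrightarrow>
                 (\<forall>t\<in>{tj - \<epsilon> * r powr (2 * \<tau>) <..< tj + \<epsilon> * r powr (2 * \<tau>)} \<inter> {a..b}.
                    \<bar>Phi \<pi> t x y\<bar> \<ge> \<delta> * r powr \<tau> / 2)))"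
    proof
      fix Ij assume Ij: "Ij \<in> components {t \<in> {a<..<b}. \<bar>Phi \<pi> t x y\<bar> < \<delta> * r powr \<tau>}"
      have P: "open Ij \<and> is_interval Ij \<and> Ij \<subseteq> {a..b} \<and>
      measure lborel Ij \<le> 2 \<and>
      (a \<notin> closure Ij \<and> b \<notin> closure Ij \<longrightarrow> 2 * (\<delta> * r powr \<tau>) \<le> K0 * r powr (- \<tau>) * measure lborel Ij) \<and>
      (\<forall>t\<in>Ij. \<bar>Phi \<pi> t x y\<bar> \<le> \<delta> * r powr \<tau> / 2 \<longrightarrow> {t - \<epsilon> * r powr (2 * \<tau>) <..< t + \<epsilon> * r powr (2 * \<tau>)} \<inter> {a<..<b} \<subseteq> Ij) \<and>
      (\<exists>tj\<in>closure Ij.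
              (\<forall>t\<in>closure Ij. \<bar>Phi \<pi> t x y\<bar> \<ge> \<bar>Phi \<pi> tj x y\<bar> \<and> \<bar>Phi \<pi> t x y\<bar> \<ge> \<delta> * r powr \<tau> * \<bar>t - tj\<bar>) \<and>
              (\<bar>Phi \<pi> tj x y\<bar> \<ge> \<delta> * r powr \<tau> / 2 \<longrightarrow> (\<forall>t\<in>{tj - \<epsilon> * r powr (2 * \<tau>) <..< tj + \<epsilon> * r powr (2 * \<tau>)} \<inter> {a..b}. \<bar>Phi \<pi> t x y\<bar> \<ge> \<delta> * r powr \<tau> / 2)))"
        by (rule AM'[THEN conjunct2, rule_format, OF Ij])
      have low: "a \<notin> closure Ij \<and> b \<notin> closure Ij \<longrightarrow> r powr (2 * \<tau>) \<le> C * measure lborel Ij"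
        using P[THEN conjunct2, THEN conjunct2, THEN conjunct2, THEN conjunct2, THEN conjunct1] powr_arith[OF dpos r, of \<tau> K0] unfolding C_def by blast
      show "open Ij \<and> is_interval Ij \<and> Ij \<subseteq> {a..b} \<and>
           measure lborel Ij \<le> 2 \<and>
           (a \<notin> closure Ij \<and> b \<notin> closure Ij \<longrightarrow> r powr (2 * \<tau>) \<le> C * measure lborel Ij) \<and>
           (\<forall>t\<in>Ij. \<bar>Phi \<pi> t x y\<bar> \<le> \<delta> * r powr \<tau> / 2 \<longrightarrow>
              {t - \<epsilon> * r powr (2 * \<tau>) <..< t + \<epsilon> * r powr (2 * \<tau>)} \<inter> {a<..<b} \<subseteq> Ij) \<and>
           (\<exists>tj\<in>closure Ij.
              (\<forall>t\<in>closure Ij. \<bar>Phi \<pi> t x y\<bar> \<ge> \<bar>Phi \<pi> tj x y\<bar> \<and>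
                 \<bar>Phi \<pi> t x y\<bar> \<ge> \<delta> * r powr \<tau> * \<bar>t - tj\<bar>) \<and>
              (\<bar>Phi \<pi> tj x y\<bar> \<ge> \<delta> * r powr \<tau> / 2 \<longrightarrow>
                 (\<forall>t\<in>{tj - \<epsilon> * r powr (2 * \<tau>) <..< tj + \<epsilon> * r powr (2 * \<tau>)} \<inter> {a..b}.
                    \<bar>Phi \<pi> t x y\<bar> \<ge> \<delta> * r powr \<tau> / 2)))"
        using P low by (elim conjE) (intro conjI)
    qed
    show ?thesis unfolding Let_def r_def[symmetric] by (intro conjI countable_finite fin each)
  qed
  show ?thesis
    by (rule exI[of _ C], rule conjI[OF Cpos], rule exI[of _ \<epsilon>], rule conjI[OF epos])
       (intro ballI impI main)
qed

end
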